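(* Let $h'_1,h'_2,l'_1,l'_2,\alpha'_1,\alpha'_2,\beta'\in\mathbb{C}$ and assume that $N:=(h'_1-h'_2-l'_1+l'_2+\alpha'_1-\alpha'_2+\beta'-2)/2$ is a non-negative integer and $\beta'\notin\{1,\dots,N\}$. Let $c_n(E')$ $(n=0,\dots,N)$ and $c(E')$ be the polynomials of the context constructed from the parameters $h''_1=l'_1,\ l''_1=h'_1,\ h''_2=h'_2,\ l''_2=l'_2,\ \alpha''_1=\alpha'_1,\ \alpha''_2=\alpha'_2,\ \beta''=\beta'$ (with this $N$), and let $E'_0$ satisfy $c(E'_0)=0$. Then the functions $$h_1(s)=s^{(h'_1+h'_2-l'_1-l'_2-\alpha'_1-\alpha'_2-\beta'+2)/2}\frac{(s/(q^{l'_1-1/2}t_1);q)_\infty}{(s/(q^{h'_1-1/2}t_1);q)_\infty}\sum_{n=0}^{N}c_n(E'_0)s^{n},$$ $$h_2(s)=s^{-\alpha'_2-N}\frac{(q^{h'_1+1/2}t_1/s;q)_\infty}{(q^{l'_1+1/2}t_1/s;q)_\infty}\sum_{n=0}^{N}c_n(E'_0)s^{n}$$ satisfy $A^{\langle4\rangle}(s;h'_1,h'_2,l'_1,l'_2,\alpha'_1,\alpha'_2,\beta')h_i(s)=E'_0h_i(s)$ for $i=1,2$.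
   Context: $q\in\mathbb{C}$ with $0<|q|<1$; powers $q^a$ via a fixed branch of $\log q$, and $s^{a}$ a fixed branch with $(qs)^a=q^as^a$. $(a;q)_\infty=\prod_{k\ge0}(1-aq^k)$, $(a;q)_n=(a;q)_\infty/(aq^n;q)_\infty$ for $n\in\mathbb{Z}$, $(a_1,\dots,a_m;q)_n=\prod_i(a_i;q)_n$. $t_1,t_2$ are fixed non-zero constants; $T_s^{\pm1}g(s)=g(q^{\pm1}s)$ and $A^{\langle 4\rangle}(s;h_1,h_2,l_1,l_2,\alpha_1,\alpha_2,\beta)=s^{-1}(s-q^{h_1+1/2}t_1)(s-q^{h_2+1/2}t_2)T_s^{-1}+q^{\alpha_1+\alpha_2}s^{-1}(s-q^{l_1-1/2}t_1)(s-q^{l_2-1/2}t_2)T_s-\{(q^{\alpha_1}+q^{\alpha_2})s+q^{(h_1+h_2+l_1+l_2+\alpha_1+\alpha_2)/2}(q^{\beta/2}+q^{-\beta/2})t_1t_2s^{-1}\}$. Polynomials: given $(h''_1,h''_2,l''_1,l''_2,\alpha''_1,\alpha''_2,\beta'')$ and $N$, put $\lambda''_1=(h''_1+h''_2-l''_1-l''_2-\alpha''_1-\alpha''_2-\beta''+2)/2$, $x''_n=t_1t_2q^{1-n+h''_1+h''_2-\lambda''_1}(1-q^{n})(1-q^{n-\beta''})$, $y''_n=q^{3/2-n-\lambda''_1}(q^{h''_1}t_1+q^{h''_2}t_2)+q^{n-3/2+\lambda''_1+\alpha''_1+\alpha''_2}(q^{l''_1}t_1+q^{l''_2}t_2)$,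 $z''_n=q^{2-n-\lambda''_1}(1-q^{n-2+\lambda''_1+\alpha''_1})(1-q^{n-2+\lambda''_1+\alpha''_2})$; $c_{-1}=0$, $c_0=1$, $c_n(E'')x''_n=c_{n-1}(E'')(E''+y''_n)-c_{n-2}(E'')z''_n$ ($1\le n\le N$), $c(E'')=x''_1\cdots x''_N[c_N(E'')(E''+y''_{N+1})-c_{N-1}(E'')z''_{N+1}]$. *)

theory Defs
  imports "HOL-Analysis.Analysis"
begin

text \<open>Powers of q through a fixed branch L of log q (exp L = q): q^a = exp (a L).\<close>
definition qpw :: "complex \<Rightarrow> complex \<Rightarrow> complex" where
  "qpw L a = exp (a * L)"

definition qpoch_inf :: "complex \<Rightarrow> complex \<Rightarrow> complex" where
  "qpoch_inf q a = (\<Prod>k. 1 - a * q ^ k)"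

text \<open>The operator A^<4>(s; h1,h2,l1,l2,a1,a2,b) applied to g, evaluated at s.
  T_s^{-1} g(s) = g(s/q), T_s g(s) = g(q s).\<close>
definition A4 ::
  "complex \<Rightarrow> complex \<Rightarrow> complex \<Rightarrow> complex \<Rightarrow>
   complex \<Rightarrow> complex \<Rightarrow> complex \<Rightarrow> complex \<Rightarrow> complex \<Rightarrow> complex \<Rightarrow> complex \<Rightarrow>
   (complex \<Rightarrow> complex) \<Rightarrow> complex \<Rightarrow> complex" where
  "A4 q L t1 t2 h1 h2 l1 l2 a1 a2 b g s =
     (s - qpw L (h1 + 1/2) * t1) * (s - qpw L (h2 + 1/2) * t2) / s * g (s / q)
   + qpw L (a1 + a2) * (s - qpw L (l1 - 1/2) * t1) * (s - qpw L (l2 - 1/2) * t2) / s * g (q * s)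
   - ((qpw L a1 + qpw L a2) * s
      + qpw L ((h1 + h2 + l1 + l2 + a1 + a2) / 2) * (qpw L (b / 2) + qpw L (- b / 2)) * t1 * t2 / s)
     * g s"

definition lam1 :: "complex \<Rightarrow> complex \<Rightarrow> complex \<Rightarrow> complex \<Rightarrow> complex \<Rightarrow> complex \<Rightarrow> complex \<Rightarrow> complex" where
  "lam1 h1 h2 l1 l2 a1 a2 b = (h1 + h2 - l1 - l2 - a1 - a2 - b + 2) / 2"

definition xco :: "complex \<Rightarrow> complex \<Rightarrow> complex \<Rightarrow> complex \<Rightarrow> complex \<Rightarrow> complex \<Rightarrow> complex \<Rightarrow>
    complex \<Rightarrow> complex \<Rightarrow> complex \<Rightarrow> complex \<Rightarrow> nat \<Rightarrow> complex" where
  "xco q L t1 t2 h1 h2 l1 l2 a1 a2 b n =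
     t1 * t2 * qpw L (1 - of_nat n + h1 + h2 - lam1 h1 h2 l1 l2 a1 a2 b)
       * (1 - q ^ n) * (1 - qpw L (of_nat n - b))"

definition yco :: "complex \<Rightarrow> complex \<Rightarrow> complex \<Rightarrow> complex \<Rightarrow> complex \<Rightarrow> complex \<Rightarrow> complex \<Rightarrow>
    complex \<Rightarrow> complex \<Rightarrow> complex \<Rightarrow> complex \<Rightarrow> nat \<Rightarrow> complex" where
  "yco q L t1 t2 h1 h2 l1 l2 a1 a2 b n =
     qpw L (3/2 - of_nat n - lam1 h1 h2 l1 l2 a1 a2 b) * (qpw L h1 * t1 + qpw L h2 * t2)
   + qpw L (of_nat n - 3/2 + lam1 h1 h2 l1 l2 a1 a2 b + a1 + a2) * (qpw L l1 * t1 + qpw L l2 * t2)"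

definition zco :: "complex \<Rightarrow> complex \<Rightarrow> complex \<Rightarrow> complex \<Rightarrow> complex \<Rightarrow> complex \<Rightarrow> complex \<Rightarrow>
    complex \<Rightarrow> complex \<Rightarrow> complex \<Rightarrow> complex \<Rightarrow> nat \<Rightarrow> complex" where
  "zco q L t1 t2 h1 h2 l1 l2 a1 a2 b n =
     qpw L (2 - of_nat n - lam1 h1 h2 l1 l2 a1 a2 b)
       * (1 - qpw L (of_nat n - 2 + lam1 h1 h2 l1 l2 a1 a2 b + a1))
       * (1 - qpw L (of_nat n - 2 + lam1 h1 h2 l1 l2 a1 a2 b + a2))"

fun crec :: "(nat \<Rightarrow> complex) \<Rightarrow> (nat \<Rightarrow> complex) \<Rightarrow> (nat \<Rightarrow> complex) \<Rightarrow> complex \<Rightarrow> nat \<Rightarrow> complex" where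
  "crec x y z E 0 = 1"
| "crec x y z E (Suc 0) = (E + y 1) / x 1"
| "crec x y z E (Suc (Suc n)) =
     (crec x y z E (Suc n) * (E + y (n + 2)) - crec x y z E n * z (n + 2)) / x (n + 2)"

definition crec_prev :: "(nat \<Rightarrow> complex) \<Rightarrow> (nat \<Rightarrow> complex) \<Rightarrow> (nat \<Rightarrow> complex) \<Rightarrow> complex \<Rightarrow> nat \<Rightarrow> complex" where
  "crec_prev x y z E n = (if n = 0 then 0 else crec x y z E (n - 1))"

definition cn :: "complex \<Rightarrow> complex \<Rightarrow> complex \<Rightarrow> complex \<Rightarrow> complex \<Rightarrow> complex \<Rightarrow> complex \<Rightarrow>
    complex \<Rightarrow> complex \<Rightarrow> complex \<Rightarrow> complex \<Rightarrow> complex \<Rightarrow> nat \<Rightarrow> complex" where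
  "cn q L t1 t2 h1 h2 l1 l2 a1 a2 b E n =
     crec (xco q L t1 t2 h1 h2 l1 l2 a1 a2 b) (yco q L t1 t2 h1 h2 l1 l2 a1 a2 b)
          (zco q L t1 t2 h1 h2 l1 l2 a1 a2 b) E n"

definition cpoly :: "complex \<Rightarrow> complex \<Rightarrow> complex \<Rightarrow> complex \<Rightarrow> complex \<Rightarrow> complex \<Rightarrow> complex \<Rightarrow>
    complex \<Rightarrow> complex \<Rightarrow> complex \<Rightarrow> complex \<Rightarrow> nat \<Rightarrow> complex \<Rightarrow> complex" where
  "cpoly q L t1 t2 h1 h2 l1 l2 a1 a2 b N E =
     (let x = xco q L t1 t2 h1 h2 l1 l2 a1 a2 b;
          y = yco q L t1 t2 h1 h2 l1 l2 a1 a2 b;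
          z = zco q L t1 t2 h1 h2 l1 l2 a1 a2 b
      in (\<Prod>n\<in>{1..N}. x n) *
         (crec x y z E N * (E + y (N + 1)) - crec_prev x y z E N * z (N + 1)))"

end

theory Submission
  imports Defs
begin

lemma qpoch_conv:
  fixes q a :: complex assumes "cmod q < 1"
  shows "convergent_prod (\<lambda>k. 1 - a * q ^ k)"
proof -
  have "summable (\<lambda>i. norm ((1 - a * q ^ i) - 1))"
    using assms by (simp add: norm_mult norm_power summable_mult summable_geometric)
  then show ?thesis
    by (intro abs_convergent_prod_imp_convergent_prod summable_imp_abs_convergent_prod)
qed

lemma qpoch_rec:
  fixes q a :: complex assumes "cmod q < 1"
  shows "qpoch_inf q a = (1 - a) * qpoch_inf q (q * a)"
proof -
  have c: "convergent_prod (\<lambda>k. 1 - a * q ^ k)" by (rule qpoch_conv[OF assms])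
  have "(\<lambda>k. 1 - a * q ^ k) has_prod ((\<Prod>k<1. 1 - a * q ^ k) * (\<Prod>k. 1 - a * q ^ (k + 1)))"
    by (rule has_prod_ignore_initial_segment'[OF c])
  then have "qpoch_inf q a = (1 - a) * (\<Prod>k. 1 - a * q ^ (k + 1))"
    unfolding qpoch_inf_def by (simp add: has_prod_iff)
  also have "(\<lambda>k. 1 - a * q ^ (k + 1)) = (\<lambda>k. 1 - (q * a) * q ^ k)"
    by (auto simp: mult_ac)
  finally show ?thesis unfolding qpoch_inf_def by simp
qed



lemma core_sum:
  fixes c a b e :: "nat \<Rightarrow> complex" and s :: complex
  assumes e0: "e 0 * c 0 = 0"
    and rec: "\<And>n. 1 \<le> n \<Longrightarrow> n \<le> N \<Longrightarrow>
        e n * c n + b (n-1) * c (n-1) + (if 2 \<le> n then a (n-2) * c (n-2) else 0) = 0"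
  shows "M \<le> N \<Longrightarrow> (\<Sum>n\<le>M. c n * (s^(n+2)*a n + s^(n+1)*b n + s^n*e n))
     = s^(M+1)*(b M * c M + (if 1 \<le> M then a (M-1)*c (M-1) else 0)) + s^(M+2)*(a M*c M)"
proof (induction M)
  case 0
  then show ?case using e0 by (simp add: algebra_simps)
next
  case (Suc M)
  have r: "e (Suc M) * c (Suc M) = - (b M * c M + (if 1 \<le> M then a (M-1) * c (M-1) else 0))"
    using rec[of "Suc M"] Suc.prems
    by (cases M) (auto simp: algebra_simps eq_neg_iff_add_eq_0)
  have "(\<Sum>n\<le>Suc M. c n * (s^(n+2)*a n + s^(n+1)*b n + s^n*e n))
     = s^(M+1)*(b M * c M + (if 1 \<le> M then a (M-1)*c (M-1) else 0)) + s^(M+2)*(a M*c M)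
       + c (Suc M) * (s^(Suc M+2)*a (Suc M) + s^(Suc M+1)*b (Suc M) + s^(Suc M)*e (Suc M))"
    using Suc by simp
  also have "\<dots> = s^(M+1)*(b M * c M + (if 1 \<le> M then a (M-1)*c (M-1) else 0) + e (Suc M) * c (Suc M))
       + s^(Suc M+1)*(b (Suc M) * c (Suc M) + a M * c M) + s^(Suc M+2)*(a (Suc M)*c (Suc M))"
    by (simp add: algebra_simps)
  also have "\<dots> = s^(Suc M+1)*(b (Suc M) * c (Suc M) + (if 1 \<le> Suc M then a (Suc M-1)*c (Suc M-1) else 0)) + s^(Suc M+2)*(a (Suc M)*c (Suc M))"
    using r by simp
  finally show ?case .
qed

lemma expand_sum:
  fixes c :: "nat \<Rightarrow> complex" and q s K1 K2 aa bb gg dd m kk E :: complex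
  assumes q: "q \<noteq> 0"
  shows "K1*(s-aa)*(s-bb)*(\<Sum>n\<le>N. c n*(s/q)^n) + K2*(s-gg)*(s-dd)*(\<Sum>n\<le>N. c n*(q* s)^n)
     - (m* s^2 + kk + E* s)*(\<Sum>n\<le>N. c n* s^n)
   = (\<Sum>n\<le>N. c n*(s^(n+2)*(K1/q^n + K2*q^n - m) + s^(n+1)*(-K1*(aa+bb)/q^n - K2*(gg+dd)*q^n - E)
        + s^n*(K1*aa*bb/q^n+K2*gg*dd*q^n - kk)))"
proof -
  have "K1*(s-aa)*(s-bb)*(\<Sum>n\<le>N. c n*(s/q)^n) + K2*(s-gg)*(s-dd)*(\<Sum>n\<le>N. c n*(q* s)^n)
     - (m* s^2 + kk + E* s)*(\<Sum>n\<le>N. c n* s^n)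
    = (\<Sum>n\<le>N. K1*(s-aa)*(s-bb)*(c n*(s/q)^n) + K2*(s-gg)*(s-dd)*(c n*(q* s)^n)
     - (m* s^2 + kk + E* s)*(c n* s^n))"
    by (simp add: sum_distrib_left sum.distrib sum_subtractf)
  also have "\<dots> = (\<Sum>n\<le>N. c n*(s^(n+2)*(K1/q^n + K2*q^n - m) + s^(n+1)*(-K1*(aa+bb)/q^n - K2*(gg+dd)*q^n - E)
        + s^n*(K1*aa*bb/q^n+K2*gg*dd*q^n - kk)))"
  proof (rule sum.cong[OF refl])
    fix n
    show "K1*(s-aa)*(s-bb)*(c n*(s/q)^n) + K2*(s-gg)*(s-dd)*(c n*(q* s)^n)
     - (m* s^2 + kk + E* s)*(c n* s^n) = c n*(s^(n+2)*(K1/q^n + K2*q^n - m) + s^(n+1)*(-K1*(aa+bb)/q^n - K2*(gg+dd)*q^n - E)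
        + s^n*(K1*aa*bb/q^n+K2*gg*dd*q^n - kk))"
      using q by (simp add: power_divide power_mult_distrib field_simps power2_eq_square)
  qed
  finally show ?thesis .
qed



lemma qpw_add: "qpw L (x + y) = qpw L x * qpw L y"
  by (simp add: qpw_def distrib_right exp_add)
lemma qpw_diff: "qpw L (x - y) = qpw L x / qpw L y"
  by (simp add: qpw_def left_diff_distrib exp_diff)
lemma qpw_minus: "qpw L (- x) = 1 / qpw L x"
  by (simp add: qpw_def exp_minus inverse_eq_divide)
lemma qpw_nz [simp]: "qpw L x \<noteq> 0"
  by (simp add: qpw_def)
lemma qpw_nat: "qpw L (of_nat n) = exp L ^ n"
  by (simp add: qpw_def exp_of_nat_mult[symmetric] mult.commute)
lemma qpw_one: "qpw L 1 = exp L" by (simp add: qpw_def)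
lemma qpw_two: "qpw L 2 = exp L ^ 2"
  using qpw_nat[of L 2] by simp
lemma qpw_three_half: "qpw L (3/2) = exp L * qpw L (1/2)"
proof -
  have "qpw L (3/2) = qpw L (1 + 1/2)" by simp
  then show ?thesis by (simp only: qpw_add qpw_one)
qed
lemma qpw_half_sq: "qpw L (1/2) * qpw L (1/2) = exp L"
  by (simp add: qpw_add[symmetric] qpw_one)

lemmas qpw_simps = qpw_add qpw_diff qpw_minus qpw_nat qpw_one qpw_two qpw_three_half

lemma coeffs:
  fixes q L ta tb h1 h2 l1 l2 a1 a2 b E :: complex and N n :: nat
  assumes Lq: "exp L = q"
    and h1: "h1 = 2 * of_nat N + 2 + h2 + l1 - l2 - a1 + a2 - b"
  defines "K1 \<equiv> qpw L (a2 + of_nat N)" and "K2 \<equiv> qpw L (a1 - of_nat N)"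
    and "aa \<equiv> qpw L (l1 + 1/2) * ta" and "bb \<equiv> qpw L (h2 + 1/2) * tb"
    and "gg \<equiv> qpw L (h1 - 1/2) * ta" and "dd \<equiv> qpw L (l2 - 1/2) * tb"
    and "m \<equiv> qpw L a1 + qpw L a2"
    and "kk \<equiv> qpw L ((h1 + h2 + l1 + l2 + a1 + a2) / 2) * (qpw L (b / 2) + qpw L (- b / 2)) * ta * tb"
  shows "K1*aa*bb/q^n + K2*gg*dd*q^n - kk = xco q L ta tb l1 h2 h1 l2 a1 a2 b n"
    and "-K1*(aa+bb)/q^n - K2*(gg+dd)*q^n - E = -(E + yco q L ta tb l1 h2 h1 l2 a1 a2 b (n+1))"
    and "K1/q^n + K2*q^n - m = zco q L ta tb l1 h2 h1 l2 a1 a2 b (n+2)"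
proof -
  have q0: "q \<noteq> 0" using Lq by auto
  have lam: "lam1 l1 h2 h1 l2 a1 a2 b = - of_nat N - a2"
    unfolding lam1_def h1 by (simp add: field_simps)
  have kk1: "qpw L ((h1 + h2 + l1 + l2 + a1 + a2) / 2) * qpw L (b / 2) = qpw L (of_nat N + 1 + h2 + l1 + a2)"
    unfolding qpw_add[symmetric] h1 by (rule arg_cong[where f="qpw L"]) (simp add: field_simps)
  have kk2: "qpw L ((h1 + h2 + l1 + l2 + a1 + a2) / 2) * qpw L (- b / 2) = qpw L (of_nat N + 1 + h2 + l1 + a2 - b)"
    unfolding qpw_add[symmetric] h1 by (rule arg_cong[where f="qpw L"]) (simp add: field_simps)
  have kk: "kk = (qpw L (of_nat N + 1 + h2 + l1 + a2) + qpw L (of_nat N + 1 + h2 + l1 + a2 - b)) * ta * tb"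
    unfolding kk_def using kk1 kk2 by (simp add: distrib_left)
  have hh: "qpw L h1 = qpw L (2 * of_nat N + 2 + h2 + l1 - l2 - a1 + a2 - b)" using h1 by simp
  note ss = qpw_add qpw_diff qpw_minus qpw_nat qpw_one qpw_two qpw_three_half Lq
  define r where "r = qpw L (1/2)"
  have r2: "r * r = q" unfolding r_def qpw_half_sq Lq ..
  have r0: "r \<noteq> 0" unfolding r_def by (rule qpw_nz)
  have ex: "qpw L (h1 - 1/2) = q^N*q^N*q*r*qpw L h2*qpw L l1*qpw L a2/(qpw L l2*qpw L a1*qpw L b)"
  proof -
    have "qpw L (h1 - 1/2) = qpw L (of_nat N + of_nat N + 1 + 1/2 + h2 + l1 - l2 - a1 + a2 - b)"
      by (rule arg_cong[where f="qpw L"]) (simp add: h1 algebra_simps)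
    also have "... = q^N*q^N*q*r*qpw L h2*qpw L l1/qpw L l2/qpw L a1*qpw L a2/qpw L b"
      unfolding r_def by (simp only: ss)
    finally show ?thesis by simp
  qed
  have ex2: "qpw L (1 - of_nat n + l1 + h2 - lam1 l1 h2 h1 l2 a1 a2 b) = q*qpw L l1*qpw L h2*q^N*qpw L a2/q^n"
  proof -
    have "qpw L (1 - of_nat n + l1 + h2 - lam1 l1 h2 h1 l2 a1 a2 b) = qpw L (1 - of_nat n + l1 + h2 + of_nat N + a2)"
      by (rule arg_cong[where f="qpw L"]) (simp add: lam algebra_simps)
    also have "... = q/q^n*qpw L l1*qpw L h2*q^N*qpw L a2" by (simp only: ss)
    finally show ?thesis by simp
  qed
  have ex3: "qpw L (of_nat n - b) = q^n / qpw L b" by (simp only: ss)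
  have kkx: "kk = (q^N*q*qpw L h2*qpw L l1*qpw L a2 + q^N*q*qpw L h2*qpw L l1*qpw L a2/qpw L b)*ta*tb"
    unfolding kk by (simp only: ss)
  have K1x: "K1 = qpw L a2 * q^N" unfolding K1_def by (simp only: ss)
  have K2x: "K2 = qpw L a1 / q^N" unfolding K2_def by (simp only: ss)
  have aax: "aa = qpw L l1 * r * ta" unfolding aa_def r_def by (simp only: ss)
  have bbx: "bb = qpw L h2 * r * tb" unfolding bb_def r_def by (simp only: ss)
  have ggx: "gg = q^N*q^N*q*r*qpw L h2*qpw L l1*qpw L a2/(qpw L l2*qpw L a1*qpw L b) * ta" unfolding gg_def ex ..
  have ddx: "dd = qpw L l2 / r * tb" unfolding dd_def r_def by (simp only: ss)
  show "K1*aa*bb/q^n + K2*gg*dd*q^n - kk = xco q L ta tb l1 h2 h1 l2 a1 a2 b n"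
    unfolding xco_def ex2 ex3 K1x K2x aax bbx ggx ddx kkx
    using q0 r0 apply (simp add: field_simps)
    using r2 by algebra
  have ey1: "qpw L (3/2 - of_nat (n+1) - lam1 l1 h2 h1 l2 a1 a2 b) = r/q^n*q^N*qpw L a2"
  proof -
    have "qpw L (3/2 - of_nat (n+1) - lam1 l1 h2 h1 l2 a1 a2 b) = qpw L (1/2 - of_nat n + of_nat N + a2)"
      by (rule arg_cong[where f="qpw L"]) (simp add: lam algebra_simps)
    also have "... = r/q^n*q^N*qpw L a2" unfolding r_def by (simp only: ss)
    finally show ?thesis .
  qed
  have ey2: "qpw L (of_nat (n+1) - 3/2 + lam1 l1 h2 h1 l2 a1 a2 b + a1 + a2) = q^n/r/q^N*qpw L a1"
  proof -
    have "qpw L (of_nat (n+1) - 3/2 + lam1 l1 h2 h1 l2 a1 a2 b + a1 + a2) = qpw L (of_nat n - 1/2 - of_nat N + a1)"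
      by (rule arg_cong[where f="qpw L"]) (simp add: lam algebra_simps)
    also have "... = q^n/r/q^N*qpw L a1" unfolding r_def by (simp only: ss)
    finally show ?thesis .
  qed
  have eh1: "qpw L h1 = q^N*q^N*q^2*qpw L h2*qpw L l1/qpw L l2/qpw L a1*qpw L a2/qpw L b"
  proof -
    have "qpw L h1 = qpw L (of_nat N + of_nat N + 2 + h2 + l1 - l2 - a1 + a2 - b)"
      by (rule arg_cong[where f="qpw L"]) (simp add: h1 algebra_simps)
    also have "... = q^N*q^N*q^2*qpw L h2*qpw L l1/qpw L l2/qpw L a1*qpw L a2/qpw L b" by (simp only: ss)
    finally show ?thesis .
  qed
  show "-K1*(aa+bb)/q^n - K2*(gg+dd)*q^n - E = -(E + yco q L ta tb l1 h2 h1 l2 a1 a2 b (n+1))"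
    unfolding yco_def ey1 ey2 eh1 K1x K2x aax bbx ggx ddx
    using q0 r0 apply (simp add: field_simps)
    using r2 by algebra
  have ez1: "qpw L (2 - of_nat (n+2) - lam1 l1 h2 h1 l2 a1 a2 b) = q^N*qpw L a2/q^n"
  proof -
    have "qpw L (2 - of_nat (n+2) - lam1 l1 h2 h1 l2 a1 a2 b) = qpw L (of_nat N + a2 - of_nat n)"
      by (rule arg_cong[where f="qpw L"]) (simp add: lam algebra_simps)
    also have "... = q^N*qpw L a2/q^n" by (simp only: ss)
    finally show ?thesis .
  qed
  have ez2: "qpw L (of_nat (n+2) - 2 + lam1 l1 h2 h1 l2 a1 a2 b + a1) = q^n/q^N/qpw L a2*qpw L a1"
  proof -
    have "qpw L (of_nat (n+2) - 2 + lam1 l1 h2 h1 l2 a1 a2 b + a1) = qpw L (of_nat n - of_nat N - a2 + a1)"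
      by (rule arg_cong[where f="qpw L"]) (simp add: lam algebra_simps)
    also have "... = q^n/q^N/qpw L a2*qpw L a1" by (simp only: ss)
    finally show ?thesis .
  qed
  have ez3: "qpw L (of_nat (n+2) - 2 + lam1 l1 h2 h1 l2 a1 a2 b + a2) = q^n/q^N"
  proof -
    have "qpw L (of_nat (n+2) - 2 + lam1 l1 h2 h1 l2 a1 a2 b + a2) = qpw L (of_nat n - of_nat N)"
      by (rule arg_cong[where f="qpw L"]) (simp add: lam algebra_simps)
    also have "... = q^n/q^N" by (simp only: ss)
    finally show ?thesis .
  qed
  show "K1/q^n + K2*q^n - m = zco q L ta tb l1 h2 h1 l2 a1 a2 b (n+2)"
    unfolding zco_def ez1 ez2 ez3 K1x K2x m_def
    using q0 by (simp add: field_simps)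
qed



lemma polyid:
  fixes q L t1 t2 h1 h2 l1 l2 a1 a2 b E0 s :: complex and N :: nat
  assumes Lq: "exp L = q"
    and h1: "h1 = 2 * of_nat N + 2 + h2 + l1 - l2 - a1 + a2 - b"
    and xnz: "\<forall>n\<in>{1..N}. xco q L t1 t2 l1 h2 h1 l2 a1 a2 b n \<noteq> 0"
    and E0: "cpoly q L t1 t2 l1 h2 h1 l2 a1 a2 b N E0 = 0"
  defines "K1 \<equiv> qpw L (a2 + of_nat N)" and "K2 \<equiv> qpw L (a1 - of_nat N)"
    and "aa \<equiv> qpw L (l1 + 1/2) * t1" and "bb \<equiv> qpw L (h2 + 1/2) * t2"
    and "gg \<equiv> qpw L (h1 - 1/2) * t1" and "dd \<equiv> qpw L (l2 - 1/2) * t2"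
    and "m \<equiv> qpw L a1 + qpw L a2"
    and "kk \<equiv> qpw L ((h1 + h2 + l1 + l2 + a1 + a2) / 2) * (qpw L (b / 2) + qpw L (- b / 2)) * t1 * t2"
    and "P \<equiv> (\<lambda>w. \<Sum>n\<le>N. cn q L t1 t2 l1 h2 h1 l2 a1 a2 b E0 n * w ^ n)"
  shows "K1*(s-aa)*(s-bb)*P (s/q) + K2*(s-gg)*(s-dd)*P (q* s) - (m* s^2 + kk + E0* s)*P s = 0"
proof -
  have q0: "q \<noteq> 0" using Lq by auto
  define x where "x = xco q L t1 t2 l1 h2 h1 l2 a1 a2 b"
  define y where "y = yco q L t1 t2 l1 h2 h1 l2 a1 a2 b"
  define z where "z = zco q L t1 t2 l1 h2 h1 l2 a1 a2 b"
  define c where "c = crec x y z E0"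
  have Pc: "P = (\<lambda>w. \<Sum>n\<le>N. c n * w ^ n)"
    unfolding P_def c_def x_def y_def z_def cn_def ..
  note cf1 = coeffs(1)[where ta=t1 and tb=t2, OF Lq h1, folded K1_def K2_def aa_def bb_def gg_def dd_def m_def kk_def x_def y_def z_def]
  note cf2 = coeffs(2)[where E=E0 and ta=t1 and tb=t2, OF Lq h1, folded K1_def K2_def aa_def bb_def gg_def dd_def m_def kk_def x_def y_def z_def]
  note cf3 = coeffs(3)[where ta=t1 and tb=t2, OF Lq h1, folded K1_def K2_def aa_def bb_def gg_def dd_def m_def kk_def x_def y_def z_def]
  note cf = cf1 cf2 cf3
  have "K1*(s-aa)*(s-bb)*P (s/q) + K2*(s-gg)*(s-dd)*P (q* s) - (m* s^2 + kk + E0* s)*P s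
     = (\<Sum>n\<le>N. c n*(s^(n+2)*z (n+2) + s^(n+1)*(-(E0 + y (n+1))) + s^n*x n))"
    unfolding Pc expand_sum[OF q0] cf ..
  also have "\<dots> = s^(N+1)*(-(E0 + y (N+1)) * c N + (if 1 \<le> N then z (N-1+2)*c (N-1) else 0)) + s^(N+2)*(z (N+2)*c N)"
  proof (rule core_sum[where a="\<lambda>n. z (n+2)" and b="\<lambda>n. -(E0 + y (n+1))" and e=x, OF _ _ order_refl])
    show "x 0 * c 0 = 0" unfolding x_def xco_def by simp
  next
    fix n assume n1: "1 \<le> n" and nN: "n \<le> N"
    have xn: "x n \<noteq> 0" using xnz n1 nN unfolding x_def by auto
    show "x n * c n + -(E0 + y (n-1+1)) * c (n-1) + (if 2 \<le> n then z (n-2+2) * c (n-2) else 0) = 0"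
    proof (cases n)
      case 0 then show ?thesis using n1 by simp
    next
      case (Suc k)
      show ?thesis
      proof (cases k)
        case 0 then show ?thesis using Suc xn unfolding c_def by simp
      next
        case (Suc j)
        have "c n = (c (j+1) * (E0 + y (j+2)) - c j * z (j+2)) / x (j+2)"
          unfolding c_def using \<open>n = Suc k\<close> Suc by (simp add: numeral_2_eq_2)
        then show ?thesis using \<open>n = Suc k\<close> Suc xn by (simp add: field_simps numeral_2_eq_2)
      qed
    qed
  qed
  also have "\<dots> = 0"
  proof -
    have zN: "z (N+2) = 0"
    proof -
      have "lam1 l1 h2 h1 l2 a1 a2 b = - of_nat N - a2"
        unfolding lam1_def h1 by (simp add: field_simps)
      then have "of_nat (N+2) - 2 + lam1 l1 h2 h1 l2 a1 a2 b + a2 = 0" by simp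
      then show ?thesis unfolding z_def zco_def by (simp add: qpw_def)
    qed
    have pnz: "(\<Prod>n\<in>{1..N}. x n) \<noteq> 0" using xnz unfolding x_def by simp
    have "(\<Prod>n\<in>{1..N}. x n) * (c N * (E0 + y (N + 1)) - crec_prev x y z E0 N * z (N + 1)) = 0"
      using E0 unfolding cpoly_def x_def y_def z_def c_def Let_def by simp
    then have t: "c N * (E0 + y (N + 1)) - crec_prev x y z E0 N * z (N + 1) = 0" using pnz by simp
    have "-(E0 + y (N+1)) * c N + (if 1 \<le> N then z (N-1+2)*c (N-1) else 0) = 0"
    proof (cases N)
      case 0
      have "c N * (E0 + y (N+1)) = 0" using t 0 unfolding crec_prev_def by simp
      then show ?thesis using 0 by (auto simp: add_eq_0_iff)
    next
      case (Suc k) then show ?thesis using t unfolding crec_prev_def c_def by (simp add: algebra_simps)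
    qed
    then show ?thesis using zN by simp
  qed
  finally show ?thesis .
qed



lemma lin4: "(A::complex) + B - (C + D) = 0 \<Longrightarrow> A + B - C = D"
  by (simp add: algebra_simps)

lemma f1_alg:
  fixes q s u v X X1 X2 Y Y1 Y2 Ql Qa K1 K2 pl bb dd m kk E Pm Pp P0 :: complex
  assumes q: "q \<noteq> 0" and s: "s \<noteq> 0" and u: "u \<noteq> 0" and v: "v \<noteq> 0" and Ql: "Ql \<noteq> 0"
    and Y1: "Y1 \<noteq> 0" and Y: "Y \<noteq> 0" and Y2: "Y2 \<noteq> 0"
    and rX1: "X1 = (1 - s/q/u) * X" and rY1: "Y1 = (1 - s/q/v) * Y"
    and rX: "X = (1 - s/u) * X2" and rY: "Y = (1 - s/v) * Y2"
    and K1: "K1 = v/u/Ql" and K2: "K2 = Qa*Ql*u/v"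
    and PI: "K1*(s-q*u)*(s-bb)*Pm + K2*(s-v)*(s-dd)*Pp - (m* s^2+kk+E* s)*P0 = 0"
  shows "(s - q* v)*(s - bb)/s * (pl/Ql * X1/Y1 * Pm) + Qa*(s - u)*(s - dd)/s*(Ql*pl*X2/Y2*Pp)
          - (m* s + kk/s)*(pl*X/Y*P0) = E*(pl*X/Y*P0)"
proof -
  have a: "q* v - s \<noteq> 0" using Y1 rY1 q v by (auto simp: field_simps)
  have b: "v - s \<noteq> 0" using Y rY v by (auto simp: field_simps)
  have T1: "(s - q* v)*(s - bb)/s * (pl/Ql * X1/Y1 * Pm) = pl*X/(Y* s) * (K1*(s-q*u)*(s-bb)*Pm)"
  proof -
    have e: "X1/Y1 = (q*u - s)* v/((q* v - s)*u) * (X/Y)" unfolding rX1 rY1 using q u v a Y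
      by (simp add: field_simps)
    have "(s - q* v)*(s - bb)/s * (pl/Ql * X1/Y1 * Pm) = (s - q* v)*(s - bb)/s * (pl/Ql * (X1/Y1) * Pm)"
      by simp
    also have "\<dots> = (s - q* v)*(s - bb)/s * (pl/Ql * ((q*u - s)* v/((q* v - s)*u) * (X/Y)) * Pm)"
      unfolding e ..
    also have "\<dots> = pl*X/(Y* s) * (K1*(s-q*u)*(s-bb)*Pm)"
      unfolding K1 using a q u v Ql s Y by (simp add: field_simps; simp add: algebra_simps)
    finally show ?thesis .
  qed
  have T2: "Qa*(s - u)*(s - dd)/s*(Ql*pl*X2/Y2*Pp) = pl*X/(Y* s) * (K2*(s-v)*(s-dd)*Pp)"
  proof -
    have e1: "(s - u)*X2 = - u * X" unfolding rX using u by (simp add: field_simps)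
    have e2: "Y2 = v/(v - s) * Y" using rY b v by (simp add: field_simps)
    have "Qa*(s - u)*(s - dd)/s*(Ql*pl*X2/Y2*Pp) = Qa*((s - u)*X2)*(s - dd)/s*(Ql*pl/Y2*Pp)"
      by simp
    also have "\<dots> = Qa*(- u * X)*(s - dd)/s*(Ql*pl/(v/(v - s) * Y)*Pp)"
      unfolding e1 e2 ..
    also have "\<dots> = pl*X/(Y* s) * (K2*(s-v)*(s-dd)*Pp)"
      unfolding K2 using b u v Ql s Y by (simp add: field_simps; simp add: algebra_simps)
    finally show ?thesis .
  qed
  have T3: "(m* s + kk/s)*(pl*X/Y*P0) + E*(pl*X/Y*P0) = pl*X/(Y* s) * ((m* s^2+kk+E* s)*P0)"
    using s Y by (simp add: field_simps power2_eq_square)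
  have G: "(s - q* v)*(s - bb)/s * (pl/Ql * X1/Y1 * Pm) + Qa*(s - u)*(s - dd)/s*(Ql*pl*X2/Y2*Pp)
          - ((m* s + kk/s)*(pl*X/Y*P0) + E*(pl*X/Y*P0)) = 0"
  proof -
    have "(s - q* v)*(s - bb)/s * (pl/Ql * X1/Y1 * Pm) + Qa*(s - u)*(s - dd)/s*(Ql*pl*X2/Y2*Pp)
          - ((m* s + kk/s)*(pl*X/Y*P0) + E*(pl*X/Y*P0))
        = pl*X/(Y* s) * (K1*(s-q*u)*(s-bb)*Pm) + pl*X/(Y* s) * (K2*(s-v)*(s-dd)*Pp) - pl*X/(Y* s) * ((m* s^2+kk+E* s)*P0)"
      by (simp only: T1 T2 T3)
    also have "\<dots> = pl*X/(Y* s) * (K1*(s-q*u)*(s-bb)*Pm + K2*(s-v)*(s-dd)*Pp - (m* s^2+kk+E* s)*P0)"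
      by (simp only: distrib_left right_diff_distrib)
    also have "\<dots> = 0" using PI by simp
    finally show ?thesis .
  qed
  show ?thesis using lin4[OF G] .
qed

lemma f2_alg:
  fixes q s u v X X1 X2 Y Y1 Y2 Qm Qa K1 K2 pm bb dd m kk E Pm Pp P0 :: complex
  assumes q: "q \<noteq> 0" and s: "s \<noteq> 0" and u: "u \<noteq> 0" and v: "v \<noteq> 0" and Qm: "Qm \<noteq> 0"
    and Y1: "Y1 \<noteq> 0" and Y: "Y \<noteq> 0" and Y2: "Y2 \<noteq> 0"
    and rX: "X = (1 - q* v/s) * X1" and rY: "Y = (1 - q*u/s) * Y1"
    and rX2: "X2 = (1 - v/s) * X" and rY2: "Y2 = (1 - u/s) * Y"
    and K1: "K1 = 1/Qm" and K2: "K2 = Qa*Qm"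
    and PI: "K1*(s-q*u)*(s-bb)*Pm + K2*(s-v)*(s-dd)*Pp - (m* s^2+kk+E* s)*P0 = 0"
  shows "(s - q* v)*(s - bb)/s * (pm/Qm * X1/Y1 * Pm) + Qa*(s - u)*(s - dd)/s*(Qm*pm*X2/Y2*Pp)
          - (m* s + kk/s)*(pm*X/Y*P0) = E*(pm*X/Y*P0)"
proof -
  have a: "s - q*u \<noteq> 0" using Y rY s by (auto simp: field_simps)
  have b: "s - u \<noteq> 0" using Y2 rY2 s by (auto simp: field_simps)
  have T1: "(s - q* v)*(s - bb)/s * (pm/Qm * X1/Y1 * Pm) = pm*X/(Y* s) * (K1*(s-q*u)*(s-bb)*Pm)"
  proof -
    have e1: "(s - q* v)*X1 = s*X" unfolding rX using s by (simp add: field_simps)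
    have e2: "Y1 = s/(s - q*u) * Y" using rY a s by (simp add: field_simps)
    have "(s - q* v)*(s - bb)/s * (pm/Qm * X1/Y1 * Pm) = ((s - q* v)*X1)*(s - bb)/s * (pm/Qm/Y1 * Pm)"
      by simp
    also have "\<dots> = (s*X)*(s - bb)/s * (pm/Qm/(s/(s - q*u) * Y) * Pm)"
      unfolding e1 e2 ..
    also have "\<dots> = pm*X/(Y* s) * (K1*(s-q*u)*(s-bb)*Pm)"
      unfolding K1 using a q u v Qm s Y by (simp add: field_simps; simp add: algebra_simps)
    finally show ?thesis .
  qed
  have T2: "Qa*(s - u)*(s - dd)/s*(Qm*pm*X2/Y2*Pp) = pm*X/(Y* s) * (K2*(s-v)*(s-dd)*Pp)"
  proof -
    have e2: "Y2 = (s - u)/s * Y" unfolding rY2 using s by (simp add: field_simps)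
    have "Qa*(s - u)*(s - dd)/s*(Qm*pm*X2/Y2*Pp) = Qa*(s - u)*(s - dd)/s*(Qm*pm*((1 - v/s) * X)/((s - u)/s * Y)*Pp)"
      unfolding rX2 e2 ..
    also have "\<dots> = pm*X/(Y* s) * (K2*(s-v)*(s-dd)*Pp)"
      unfolding K2 using b u v Qm s Y by (simp add: field_simps; simp add: algebra_simps)
    finally show ?thesis .
  qed
  have T3: "(m* s + kk/s)*(pm*X/Y*P0) + E*(pm*X/Y*P0) = pm*X/(Y* s) * ((m* s^2+kk+E* s)*P0)"
    using s Y by (simp add: field_simps power2_eq_square)
  have G: "(s - q* v)*(s - bb)/s * (pm/Qm * X1/Y1 * Pm) + Qa*(s - u)*(s - dd)/s*(Qm*pm*X2/Y2*Pp)
          - ((m* s + kk/s)*(pm*X/Y*P0) + E*(pm*X/Y*P0)) = 0"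
  proof -
    have "(s - q* v)*(s - bb)/s * (pm/Qm * X1/Y1 * Pm) + Qa*(s - u)*(s - dd)/s*(Qm*pm*X2/Y2*Pp)
          - ((m* s + kk/s)*(pm*X/Y*P0) + E*(pm*X/Y*P0))
        = pm*X/(Y* s) * (K1*(s-q*u)*(s-bb)*Pm) + pm*X/(Y* s) * (K2*(s-v)*(s-dd)*Pp) - pm*X/(Y* s) * ((m* s^2+kk+E* s)*P0)"
      by (simp only: T1 T2 T3)
    also have "\<dots> = pm*X/(Y* s) * (K1*(s-q*u)*(s-bb)*Pm + K2*(s-v)*(s-dd)*Pp - (m* s^2+kk+E* s)*P0)"
      by (simp only: distrib_left right_diff_distrib)
    also have "\<dots> = 0" using PI by simp
    finally show ?thesis .
  qed
  show ?thesis using lin4[OF G] .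
qed

theorem theorem3p2:
  fixes q L t1 t2 :: complex
    and pw :: "complex \<Rightarrow> complex \<Rightarrow> complex"
    and h1' h2' l1' l2' a1' a2' b' E0 s :: complex
    and N :: nat
  assumes q0: "0 < cmod q" and q1: "cmod q < 1" and Lq: "exp L = q"
    and t1: "t1 \<noteq> 0" and t2: "t2 \<noteq> 0"
    and pw_shift: "\<And>a z. z \<noteq> 0 \<Longrightarrow> pw a (q * z) = qpw L a * pw a z"
    and N_def: "(h1' - h2' - l1' + l2' + a1' - a2' + b' - 2) / 2 = of_nat N"
    and b_notin: "\<forall>n\<in>{1..N}. b' \<noteq> of_nat n"
    and x_def: "\<forall>n\<in>{1..N}. xco q L t1 t2 l1' h2' h1' l2' a1' a2' b' n \<noteq> 0"
    and E0: "cpoly q L t1 t2 l1' h2' h1' l2' a1' a2' b' N E0 = 0"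
    and s0: "s \<noteq> 0"
    and den1: "\<forall>w\<in>{s / q, s, q * s}. qpoch_inf q (w / (qpw L (h1' - 1/2) * t1)) \<noteq> 0"
    and den2: "\<forall>w\<in>{s / q, s, q * s}. qpoch_inf q (qpw L (l1' + 1/2) * t1 / w) \<noteq> 0"
  shows
    "let P = (\<lambda>w. \<Sum>n\<le>N. cn q L t1 t2 l1' h2' h1' l2' a1' a2' b' E0 n * w ^ n);
         f1 = (\<lambda>w. pw ((h1' + h2' - l1' - l2' - a1' - a2' - b' + 2) / 2) w
                  * qpoch_inf q (w / (qpw L (l1' - 1/2) * t1))
                  / qpoch_inf q (w / (qpw L (h1' - 1/2) * t1)) * P w);
         f2 = (\<lambda>w. pw (- a2' - of_nat N) w
                  * qpoch_inf q (qpw L (h1' + 1/2) * t1 / w)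
                  / qpoch_inf q (qpw L (l1' + 1/2) * t1 / w) * P w)
     in A4 q L t1 t2 h1' h2' l1' l2' a1' a2' b' f1 s = E0 * f1 s
      \<and> A4 q L t1 t2 h1' h2' l1' l2' a1' a2' b' f2 s = E0 * f2 s"
  proof -
  have qnz: "q \<noteq> 0" using q0 by auto
  have h1eq: "h1' = 2 * of_nat N + 2 + h2' + l1' - l2' - a1' + a2' - b'"
    using N_def by (simp add: field_simps)
  let ?u = "qpw L (l1' - 1/2) * t1"
  let ?v = "qpw L (h1' - 1/2) * t1"
  let ?bb = "qpw L (h2' + 1/2) * t2"
  let ?dd = "qpw L (l2' - 1/2) * t2"
  let ?m = "qpw L a1' + qpw L a2'"
  let ?kk = "qpw L ((h1' + h2' + l1' + l2' + a1' + a2') / 2) * (qpw L (b' / 2) + qpw L (- b' / 2)) * t1 * t2"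
  let ?Qa = "qpw L (a1' + a2')"
  have unz: "?u \<noteq> 0" using t1 by simp
  have vnz: "?v \<noteq> 0" using t1 by simp
  have Qh: "qpw L (h1' + 1/2) * t1 = q * ?v"
  proof -
    have "qpw L (h1' + 1/2) = qpw L (h1' - 1/2 + 1)" by (rule arg_cong[where f="qpw L"]) simp
    also have "\<dots> = qpw L (h1' - 1/2) * q" by (simp only: qpw_add qpw_one Lq)
    finally show ?thesis by (simp add: mult_ac)
  qed
  have Qu: "qpw L (l1' + 1/2) * t1 = q * ?u"
  proof -
    have "qpw L (l1' + 1/2) = qpw L (l1' - 1/2 + 1)" by (rule arg_cong[where f="qpw L"]) simp
    also have "\<dots> = qpw L (l1' - 1/2) * q" by (simp only: qpw_add qpw_one Lq)
    finally show ?thesis by (simp add: mult_ac)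
  qed
  have pw2: "\<And>a. pw a (q * s) = qpw L a * pw a s" using pw_shift s0 by blast
  have pw1: "\<And>a. pw a (s / q) = pw a s / qpw L a"
  proof -
    fix a
    have "pw a (q * (s / q)) = qpw L a * pw a (s / q)" using pw_shift[of "s / q" a] s0 qnz by simp
    moreover have "q * (s / q) = s" using qnz by simp
    ultimately have "pw a s = qpw L a * pw a (s / q)" by simp
    then show "pw a (s / q) = pw a s / qpw L a" using qnz by (simp add: field_simps)
  qed
  define P where "P = (\<lambda>w. \<Sum>n\<le>N. cn q L t1 t2 l1' h2' h1' l2' a1' a2' b' E0 n * w ^ n)"
  have PI: "qpw L (a2' + of_nat N) * (s - q * ?u) * (s - ?bb) * P (s / q)
      + qpw L (a1' - of_nat N) * (s - ?v) * (s - ?dd) * P (q * s) - (?m * s^2 + ?kk + E0 * s) * P s = 0"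
    unfolding P_def Qu[symmetric] by (rule polyid[OF Lq h1eq x_def E0])
  define lam where "lam = (h1' + h2' - l1' - l2' - a1' - a2' - b' + 2) / 2"
  define f1 where "f1 = (\<lambda>w. pw lam w
                  * qpoch_inf q (w / (qpw L (l1' - 1/2) * t1))
                  / qpoch_inf q (w / (qpw L (h1' - 1/2) * t1)) * P w)"
  define mu where "mu = - a2' - of_nat N"
  define f2 where "f2 = (\<lambda>w. pw mu w
                  * qpoch_inf q (qpw L (h1' + 1/2) * t1 / w)
                  / qpoch_inf q (qpw L (l1' + 1/2) * t1 / w) * P w)"
  have F1: "A4 q L t1 t2 h1' h2' l1' l2' a1' a2' b' f1 s = E0 * f1 s"
  proof -
    have rX1: "qpoch_inf q (s / q / ?u) = (1 - s / q / ?u) * qpoch_inf q (s / ?u)"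
      using qpoch_rec[OF q1, of "s / q / ?u"] qnz by simp
    have rY1: "qpoch_inf q (s / q / ?v) = (1 - s / q / ?v) * qpoch_inf q (s / ?v)"
      using qpoch_rec[OF q1, of "s / q / ?v"] qnz by simp
    have rX: "qpoch_inf q (s / ?u) = (1 - s / ?u) * qpoch_inf q (q * s / ?u)"
      using qpoch_rec[OF q1, of "s / ?u"] by simp
    have rY: "qpoch_inf q (s / ?v) = (1 - s / ?v) * qpoch_inf q (q * s / ?v)"
      using qpoch_rec[OF q1, of "s / ?v"] by simp
    have Y1: "qpoch_inf q (s / q / ?v) \<noteq> 0" using den1 by simp
    have Y: "qpoch_inf q (s / ?v) \<noteq> 0" using den1 by simp
    have Y2: "qpoch_inf q (q * s / ?v) \<noteq> 0" using den1 by simp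
    have K1: "qpw L (a2' + of_nat N) = ?v / ?u / qpw L lam"
    proof -
      have "qpw L (a2' + of_nat N) = qpw L (h1' - 1/2 - (l1' - 1/2) - lam)"
        by (rule arg_cong[where f="qpw L"]) (simp add: lam_def h1eq field_simps)
      also have "\<dots> = qpw L (h1' - 1/2) / qpw L (l1' - 1/2) / qpw L lam" by (simp only: qpw_diff)
      finally show ?thesis using t1 by simp
    qed
    have K2: "qpw L (a1' - of_nat N) = ?Qa * qpw L lam * ?u / ?v"
    proof -
      have "qpw L (a1' - of_nat N) = qpw L (a1' + a2' + lam + (l1' - 1/2) - (h1' - 1/2))"
        by (rule arg_cong[where f="qpw L"]) (simp add: lam_def h1eq field_simps)
      also have "\<dots> = ?Qa * qpw L lam * qpw L (l1' - 1/2) / qpw L (h1' - 1/2)" by (simp only: qpw_diff qpw_add)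
      finally show ?thesis using t1 by simp
    qed
    note R = f1_alg[OF qnz s0 unz vnz qpw_nz Y1 Y Y2 rX1 rY1 rX rY K1 K2 PI, where pl = "pw lam s"]
    show ?thesis unfolding A4_def f1_def pw1 pw2 Qh using R by simp
  qed
  have F2: "A4 q L t1 t2 h1' h2' l1' l2' a1' a2' b' f2 s = E0 * f2 s"
  proof -
    have rX: "qpoch_inf q (q * ?v / s) = (1 - q * ?v / s) * qpoch_inf q (q * ?v / (s / q))"
    proof -
      have a: "q * (q * ?v / s) = q * ?v / (s / q)" using qnz by simp
      show ?thesis using qpoch_rec[OF q1, of "q * ?v / s"] by (simp only: a)
    qed
    have rY: "qpoch_inf q (q * ?u / s) = (1 - q * ?u / s) * qpoch_inf q (q * ?u / (s / q))"
    proof -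
      have a: "q * (q * ?u / s) = q * ?u / (s / q)" using qnz by simp
      show ?thesis using qpoch_rec[OF q1, of "q * ?u / s"] by (simp only: a)
    qed
    have rX2: "qpoch_inf q (q * ?v / (q * s)) = (1 - ?v / s) * qpoch_inf q (q * ?v / s)"
    proof -
      have b: "q * ?v / (q * s) = ?v / s" using qnz by simp
      have a: "q * (?v / s) = q * ?v / s" by simp
      show ?thesis using qpoch_rec[OF q1, of "q * ?v / (q * s)"] by (simp only: a b)
    qed
    have rY2: "qpoch_inf q (q * ?u / (q * s)) = (1 - ?u / s) * qpoch_inf q (q * ?u / s)"
    proof -
      have b: "q * ?u / (q * s) = ?u / s" using qnz by simp
      have a: "q * (?u / s) = q * ?u / s" by simp
      show ?thesis using qpoch_rec[OF q1, of "q * ?u / (q * s)"] by (simp only: a b)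
    qed
    have Y1: "qpoch_inf q (q * ?u / (s / q)) \<noteq> 0" using den2 Qu by simp
    have Y: "qpoch_inf q (q * ?u / s) \<noteq> 0" using den2 Qu by simp
    have Y2: "qpoch_inf q (q * ?u / (q * s)) \<noteq> 0" using den2 Qu by simp
    have K1: "qpw L (a2' + of_nat N) = 1 / qpw L mu"
    proof -
      have "qpw L mu = qpw L (- (a2' + of_nat N))"
        by (rule arg_cong[where f="qpw L"]) (simp add: mu_def)
      also have "\<dots> = 1 / qpw L (a2' + of_nat N)" by (rule qpw_minus)
      finally have "qpw L mu = 1 / qpw L (a2' + of_nat N)" .
      then show ?thesis by (simp add: field_simps)
    qed
    have K2: "qpw L (a1' - of_nat N) = ?Qa * qpw L mu"
    proof -
      have "qpw L (a1' - of_nat N) = qpw L (a1' + a2' + mu)"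
        by (rule arg_cong[where f="qpw L"]) (simp add: mu_def)
      then show ?thesis by (simp only: qpw_add)
    qed
    note R = f2_alg[OF qnz s0 unz vnz qpw_nz Y1 Y Y2 rX rY rX2 rY2 K1 K2 PI, where pm = "pw mu s"]
    show ?thesis unfolding A4_def f2_def pw1 pw2 Qh Qu using R by simp
  qed
  show ?thesis unfolding Let_def using F1 F2 unfolding f1_def f2_def P_def lam_def mu_def by blast
qed

end
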